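(* Let $G=(V,E)$ be an undirected graph that is a pseudo-clique of size $n\ge 3$ and cardinality $k\ge 0$. Then the tree width of $G$ is $n-1$.
   Context: An undirected graph $G=(V,E)$ is a pseudo-clique if $V$ can be partitioned into a set $V_{\mathit{main}}$ of main-nodes and, for each pair $u\neq v$ of main-nodes, a set $V_{u,v}$ of edge-nodes, such that for each such pair, writing $V_{u,v}=\{v_1,\dots,v_m\}$, the edges $(u,v_1),(v_1,v_2),\dots,(v_{m-1},v_m),(v_m,v)$ are present (so $u,v_1,\dots,v_m,v$ is a simple path from $u$ to $v$), and no other edges are present. The size of the pseudo-clique is $|V_{\mathit{main}}|$, and its cardinality is $\max_{u\neq v\in V_{\mathit{main}}}|V_{u,v}|$. *)

theory Defs
  imports Main
begin

text \<open>Undirected graphs are represented as a vertex set V and a set E of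
  edges, each edge being a two-element set of vertices.\<close>

definition path_edges :: "'a list \<Rightarrow> 'a set set" where
  "path_edges xs = {{xs ! i, xs ! Suc i} | i. Suc i < length xs}"

text \<open>The main-node set is M;
  for an (unordered) pair of distinct main nodes u, v the edge-node set V_{u,v}
  is set (P u v), where the list P u v enumerates it in path order from u to v
  (so P v u is the reverse of P u v).\<close>

definition pseudo_clique :: "'a set \<Rightarrow> 'a set set \<Rightarrow> nat \<Rightarrow> nat \<Rightarrow> bool" where
  "pseudo_clique V E n k \<longleftrightarrow>
     (\<exists>M P. finite M \<and> card M = n \<and>
        (\<forall>u\<in>M. \<forall>v\<in>M. u \<noteq> v \<longrightarrow>
            P v u = rev (P u v) \<and> distinct (P u v) \<and> set (P u v) \<inter> M = {}) \<and>
        (\<forall>u\<in>M. \<forall>v\<in>M. \<forall>u'\<in>M. \<forall>v'\<in>M. u \<noteq> v \<and> u' \<noteq> v' \<and> {u, v} \<noteq> {u', v'} \<longrightarrow>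
            set (P u v) \<inter> set (P u' v') = {}) \<and>
        V = M \<union> \<Union>{set (P u v) | u v. u \<in> M \<and> v \<in> M \<and> u \<noteq> v} \<and>
        E = \<Union>{path_edges (u # P u v @ [v]) | u v. u \<in> M \<and> v \<in> M \<and> u \<noteq> v} \<and>
        k = Max {length (P u v) | u v. u \<in> M \<and> v \<in> M \<and> u \<noteq> v})"

definition has_cycle :: "'b set set \<Rightarrow> bool" where
  "has_cycle F \<longleftrightarrow> (\<exists>cs. length cs \<ge> 3 \<and> distinct cs \<and>
      (\<forall>i < length cs. {cs ! i, cs ! ((i + 1) mod length cs)} \<in> F))"

definition is_tree :: "'b set \<Rightarrow> 'b set set \<Rightarrow> bool" where
  "is_tree I F \<longleftrightarrow> finite I \<and> I \<noteq> {} \<and>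
     F \<subseteq> {{i, j} | i j. i \<in> I \<and> j \<in> I \<and> i \<noteq> j} \<and>
     (\<forall>i\<in>I. \<forall>j\<in>I. (\<lambda>a b. {a, b} \<in> F)\<^sup>*\<^sup>* i j) \<and>
     \<not> has_cycle F"

definition tree_decomposition ::
  "'a set \<Rightarrow> 'a set set \<Rightarrow> 'b set \<Rightarrow> 'b set set \<Rightarrow> ('b \<Rightarrow> 'a set) \<Rightarrow> bool" where
  "tree_decomposition V E I F B \<longleftrightarrow> is_tree I F \<and>
     (\<forall>i\<in>I. B i \<subseteq> V) \<and>
     (\<forall>v\<in>V. \<exists>i\<in>I. v \<in> B i) \<and>
     (\<forall>e\<in>E. \<exists>i\<in>I. e \<subseteq> B i) \<and>
     (\<forall>v\<in>V. \<forall>i\<in>I. \<forall>j\<in>I. v \<in> B i \<and> v \<in> B j \<longrightarrow>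
        (\<lambda>a b. {a, b} \<in> F \<and> v \<in> B a \<and> v \<in> B b)\<^sup>*\<^sup>* i j)"

definition decomp_width :: "'b set \<Rightarrow> ('b \<Rightarrow> 'a set) \<Rightarrow> nat" where
  "decomp_width I B = Max ((\<lambda>i. card (B i)) ` I) - 1"

text \<open>Tree nodes are taken from nat (every finite tree is isomorphic to one on nat).\<close>

definition treewidth :: "'a set \<Rightarrow> 'a set set \<Rightarrow> nat" where
  "treewidth V E = (LEAST w. \<exists>(I :: nat set) F B.
      tree_decomposition V E I F B \<and> decomp_width I B = w)"

end

theory Submission
  imports Defs
begin
lemma sym_rt:
  assumes "\<And>a b. R a b \<Longrightarrow> R b a" "R\<^sup>*\<^sup>* x y"
  shows "R\<^sup>*\<^sup>* y x"
  using assms(2)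
proof (induction rule: rtranclp_induct)
  case base then show ?case by simp
next
  case (step b c)
  then show ?case using assms(1) by (meson converse_rtranclp_into_rtranclp)
qed

lemma tree_fin: "is_tree I F \<Longrightarrow> finite I" by (simp add: is_tree_def)
lemma tree_ne: "is_tree I F \<Longrightarrow> I \<noteq> {}" by (simp add: is_tree_def)
lemma tree_sub: "is_tree I F \<Longrightarrow> F \<subseteq> {{i, j} | i j. i \<in> I \<and> j \<in> I \<and> i \<noteq> j}" by (simp add: is_tree_def)
lemma tree_conn: "is_tree I F \<Longrightarrow> i \<in> I \<Longrightarrow> j \<in> I \<Longrightarrow> (\<lambda>a b. {a, b} \<in> F)\<^sup>*\<^sup>* i j" by (simp add: is_tree_def)
lemma tree_nocyc: "is_tree I F \<Longrightarrow> \<not> has_cycle F" by (simp add: is_tree_def)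

lemma first_step:
  assumes "R\<^sup>*\<^sup>* a b" "a \<noteq> b"
  obtains c where "R a c"
  using assms by (cases rule: converse_rtranclpE) auto

lemma tree_edge:
  assumes "is_tree I F" "{x, y} \<in> F"
  shows "x \<in> I \<and> y \<in> I \<and> x \<noteq> y"
proof -
  from assms have "{x,y} \<in> {{i, j} | i j. i \<in> I \<and> j \<in> I \<and> i \<noteq> j}"
    using tree_sub[OF assms(1)] by blast
  then obtain i j where "{x,y} = {i,j}" "i \<in> I" "j \<in> I" "i \<noteq> j" by blast
  then show ?thesis by (metis doubleton_eq_iff)
qed

definition conn :: "'b set set \<Rightarrow> 'b set \<Rightarrow> bool" where
  "conn F S \<longleftrightarrow> (\<forall>i\<in>S. \<forall>j\<in>S. (\<lambda>a b. {a,b} \<in> F \<and> a \<in> S \<and> b \<in> S)\<^sup>*\<^sup>* i j)"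

lemma leaf_exists:
  assumes T: "is_tree I F" and c2: "card I \<ge> 2"
  shows "\<exists>l p. l \<in> I \<and> p \<in> I \<and> l \<noteq> p \<and> {l, p} \<in> F \<and> (\<forall>x. {l, x} \<in> F \<longrightarrow> x = p)"
proof -
  have fin: "finite I" using tree_fin[OF T] .
  obtain a b where ab: "a \<in> I" "b \<in> I" "a \<noteq> b"
  proof -
    have "\<not> card I \<le> Suc 0" using c2 by simp
    then show ?thesis using that by (auto simp: card_le_Suc0_iff_eq[OF fin])
  qed
  have "(\<lambda>a b. {a, b} \<in> F)\<^sup>*\<^sup>* a b" using tree_conn[OF T ab(1,2)] .
  then have "\<exists>c. {a, c} \<in> F" using ab(3) by (cases rule: converse_rtranclpE) auto
  then obtain c where ac: "{a, c} \<in> F" by blast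
  define Pth where "Pth = {xs. distinct xs \<and> set xs \<subseteq> I \<and> (\<forall>i. Suc i < length xs \<longrightarrow> {xs!i, xs!Suc i} \<in> F)}"
  have "[a, c] \<in> Pth" using tree_edge[OF T ac] ac unfolding Pth_def
    by (auto simp: less_Suc_eq)
  moreover have "\<forall>xs. xs \<in> Pth \<longrightarrow> length xs < Suc (card I)"
  proof (intro allI impI)
    fix xs assume "xs \<in> Pth"
    then have "distinct xs" "set xs \<subseteq> I" unfolding Pth_def by auto
    then show "length xs < Suc (card I)"
      using card_mono[OF fin] distinct_card by (metis less_Suc_eq_le)
  qed
  ultimately obtain xs where xs: "xs \<in> Pth" and mx: "\<forall>ys. ys \<in> Pth \<longrightarrow> length ys \<le> length xs"
    using ex_has_greatest_nat[of "\<lambda>xs. xs \<in> Pth" "[a,c]" length "Suc (card I)"] by blast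
  have len: "length xs \<ge> 2" using mx \<open>[a,c] \<in> Pth\<close> by fastforce
  have xsd: "distinct xs" "set xs \<subseteq> I" "\<And>i. Suc i < length xs \<Longrightarrow> {xs!i, xs!Suc i} \<in> F"
    using xs unfolding Pth_def by auto
  define l where "l = xs ! 0"
  define p where "p = xs ! 1"
  have lp: "{l, p} \<in> F" using xsd(3)[of 0] len unfolding l_def p_def by simp
  have uniq: "x = p" if lx: "{l, x} \<in> F" for x
  proof -
    have xI: "x \<in> I" and xl: "x \<noteq> l" using tree_edge[OF T lx] by auto
    have "x \<in> set xs"
    proof (rule ccontr)
      assume nx: "x \<notin> set xs"
      have "x # xs \<in> Pth" unfolding Pth_def
      proof (intro CollectI conjI allI impI)
        show "distinct (x # xs)" using nx xsd by simp
        show "set (x # xs) \<subseteq> I" using xI xsd by simp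
        fix i assume "Suc i < length (x # xs)"
        then show "{(x # xs) ! i, (x # xs) ! Suc i} \<in> F"
          using xsd(3)[of "i - 1"] lx unfolding l_def
          by (cases i) (auto simp: insert_commute)
      qed
      then show False using mx by fastforce
    qed
    then obtain j where j: "j < length xs" "xs ! j = x" by (meson in_set_conv_nth)
    have "j \<noteq> 0" using j xl unfolding l_def by (cases "j = 0") auto
    moreover have "\<not> j \<ge> 2"
    proof
      assume j2: "j \<ge> 2"
      define cs where "cs = take (Suc j) xs"
      have lcs: "length cs = Suc j" using j unfolding cs_def by simp
      have "has_cycle F" unfolding has_cycle_def
      proof (intro exI conjI allI impI)
        show "3 \<le> length cs" using lcs j2 by simp
        show "distinct cs" using xsd unfolding cs_def by simp
        fix i assume i: "i < length cs"
        show "{cs ! i, cs ! ((i + 1) mod length cs)} \<in> F"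
        proof (cases "i < j")
          case True
          then show ?thesis using xsd(3)[of i] j lcs unfolding cs_def by simp
        next
          case False
          then have "i = j" using i lcs by simp
          then show ?thesis using lx j lcs unfolding cs_def l_def by (simp add: insert_commute)
        qed
      qed
      then show False using tree_nocyc[OF T] by blast
    qed
    ultimately have "j = 1" by simp
    then show ?thesis using j unfolding p_def by simp
  qed
  have "l \<in> I" "p \<in> I" "l \<noteq> p" using tree_edge[OF T lp] by auto
  then show ?thesis using lp uniq by blast
qed

lemma contract:
  assumes uq: "\<forall>x. {l, x} \<in> F \<longrightarrow> x = p"
      and r: "(\<lambda>a b. {a,b} \<in> F \<and> a \<in> S \<and> b \<in> S)\<^sup>*\<^sup>* x y"
  shows "(\<lambda>a b. {a,b} \<in> {e \<in> F. l \<notin> e} \<and> a \<in> S - {l} \<and> b \<in> S - {l})\<^sup>*\<^sup>*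
           (if x = l then p else x) (if y = l then p else y)"
  using r
proof (induction rule: rtranclp_induct)
  case base then show ?case by simp
next
  case (step b c)
  have e: "{b, c} \<in> F" "b \<in> S" "c \<in> S" using step by auto
  show ?case
  proof (cases "b = l \<or> c = l")
    case True
    have "(if b = l then p else b) = (if c = l then p else c)"
    proof (cases "b = l")
      case True
      then have "c = p" using uq e(1) by blast
      then show ?thesis using True by simp
    next
      case False
      then have "c = l" using \<open>b = l \<or> c = l\<close> by blast
      then have "{l, b} \<in> F" using e(1) by (simp add: insert_commute)
      then have "b = p" using uq by blast
      then show ?thesis using False \<open>c = l\<close> by simp
    qed
    then show ?thesis using step.IH by simp
  next
    case False
    then have rel: "(\<lambda>a b. {a,b} \<in> {e \<in> F. l \<notin> e} \<and> a \<in> S - {l} \<and> b \<in> S - {l}) b c"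
      using e by auto
    have "(if b = l then p else b) = b" "(if c = l then p else c) = c" using False by auto
    have "(\<lambda>a b. {a,b} \<in> {e \<in> F. l \<notin> e} \<and> a \<in> S - {l} \<and> b \<in> S - {l})\<^sup>*\<^sup>* (if x = l then p else x) b"
      using step.IH \<open>(if b = l then p else b) = b\<close> by simp
    from rtranclp.rtrancl_into_rtrancl[of "\<lambda>a b. {a,b} \<in> {e \<in> F. l \<notin> e} \<and> a \<in> S - {l} \<and> b \<in> S - {l}", OF this rel]
    show ?thesis using \<open>(if c = l then p else c) = c\<close> by simp
  qed
qed

lemma has_cycle_mono: "has_cycle F' \<Longrightarrow> F' \<subseteq> F \<Longrightarrow> has_cycle F"
  unfolding has_cycle_def by blast

lemma remove_leaf:
  assumes T: "is_tree I F" and l: "l \<in> I" "p \<in> I" "l \<noteq> p" and uq: "\<forall>x. {l, x} \<in> F \<longrightarrow> x = p"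
  shows "is_tree (I - {l}) {e \<in> F. l \<notin> e}"
  unfolding is_tree_def
proof (intro conjI ballI)
  show "finite (I - {l})" using tree_fin[OF T] by blast
  show "I - {l} \<noteq> {}" using l by blast
  show "{e \<in> F. l \<notin> e} \<subseteq> {{i, j} |i j. i \<in> I - {l} \<and> j \<in> I - {l} \<and> i \<noteq> j}"
    using tree_sub[OF T] by blast
  show "\<not> has_cycle {e \<in> F. l \<notin> e}" using tree_nocyc[OF T] has_cycle_mono[of "{e \<in> F. l \<notin> e}" F]
    by blast
  fix i j assume ij: "i \<in> I - {l}" "j \<in> I - {l}"
  have "(\<lambda>a b. {a,b} \<in> F)\<^sup>*\<^sup>* i j" using tree_conn[OF T] ij by blast
  then have "(\<lambda>a b. {a,b} \<in> F \<and> a \<in> I \<and> b \<in> I)\<^sup>*\<^sup>* i j"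
    by (rule rtranclp_mono[THEN predicate2D, rotated]) (use tree_edge[OF T] in blast)
  from contract[OF uq this] ij
  have "(\<lambda>a b. {a,b} \<in> {e \<in> F. l \<notin> e} \<and> a \<in> I - {l} \<and> b \<in> I - {l})\<^sup>*\<^sup>* i j" by simp
  then show "(\<lambda>a b. {a, b} \<in> {e \<in> F. l \<notin> e})\<^sup>*\<^sup>* i j"
    by (rule rtranclp_mono[THEN predicate2D, rotated]) blast
qed

lemma conn_leaf_nb:
  assumes "conn F S" "l \<in> S" "y \<in> S" "y \<noteq> l" "\<forall>x. {l, x} \<in> F \<longrightarrow> x = p"
  shows "p \<in> S"
proof -
  have "(\<lambda>a b. {a,b} \<in> F \<and> a \<in> S \<and> b \<in> S)\<^sup>*\<^sup>* l y" using assms unfolding conn_def by blast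
  then have "\<exists>c. {l, c} \<in> F \<and> c \<in> S" using assms(4) by (cases rule: converse_rtranclpE) auto
  then obtain c where "{l, c} \<in> F" "c \<in> S" by blast
  then show ?thesis using assms(5) by auto
qed

lemma helly:
  assumes "is_tree I F" "\<SS> \<noteq> {}" "\<forall>S\<in>\<SS>. S \<noteq> {} \<and> S \<subseteq> I \<and> conn F S"
    "\<forall>S\<in>\<SS>. \<forall>S'\<in>\<SS>. S \<inter> S' \<noteq> {}"
  shows "\<exists>t\<in>I. \<forall>S\<in>\<SS>. t \<in> S"
  using assms
proof (induction "card I" arbitrary: I F \<SS> rule: less_induct)
  case less
  have fin: "finite I" and ne: "I \<noteq> {}" using tree_fin[OF less.prems(1)] tree_ne[OF less.prems(1)] by auto
  show ?case
  proof (cases "card I \<ge> 2")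
    case False
    have "card I > 0" using fin ne by auto
    with False have "card I = 1" by linarith
    then obtain t where "I = {t}" using card_1_singletonE by blast
    then show ?thesis using less.prems(3) by blast
  next
    case True
    obtain l p where lp: "l \<in> I" "p \<in> I" "l \<noteq> p" "{l, p} \<in> F" and uq: "\<forall>x. {l, x} \<in> F \<longrightarrow> x = p"
      using leaf_exists[OF less.prems(1) True] by blast
    show ?thesis
    proof (cases "\<exists>S\<in>\<SS>. S = {l}")
      case True
      then show ?thesis using less.prems(4) lp(1) by blast
    next
      case False
      define \<SS>' where "\<SS>' = (\<lambda>S. S - {l}) ` \<SS>"
      have T': "is_tree (I - {l}) {e \<in> F. l \<notin> e}" using remove_leaf[OF less.prems(1) lp(1-3) uq] .
      have "\<exists>t\<in>I - {l}. \<forall>S\<in>\<SS>'. t \<in> S"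
      proof (rule less.hyps[OF _ T'])
        show "card (I - {l}) < card I" using fin lp(1) by (rule card_Diff1_less)
        show "\<SS>' \<noteq> {}" using less.prems(2) unfolding \<SS>'_def by blast
        show "\<forall>S\<in>\<SS>'. S \<noteq> {} \<and> S \<subseteq> I - {l} \<and> conn {e \<in> F. l \<notin> e} S"
        proof
          fix S' assume "S' \<in> \<SS>'"
          then obtain S where S: "S \<in> \<SS>" "S' = S - {l}" unfolding \<SS>'_def by blast
          have "S \<noteq> {}" "S \<subseteq> I" "conn F S" using less.prems(3) S(1) by auto
          moreover have "S \<noteq> {l}" using False S(1) by blast
          ultimately have "S' \<noteq> {}" "S' \<subseteq> I - {l}" using S(2) by auto
          moreover have "conn {e \<in> F. l \<notin> e} S'"
            unfolding conn_def
          proof (intro ballI)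
            fix i j assume ij: "i \<in> S'" "j \<in> S'"
            then have "(\<lambda>a b. {a,b} \<in> F \<and> a \<in> S \<and> b \<in> S)\<^sup>*\<^sup>* i j"
              using \<open>conn F S\<close> S(2) unfolding conn_def by blast
            from contract[OF uq this] ij S(2)
            show "(\<lambda>a b. {a, b} \<in> {e \<in> F. l \<notin> e} \<and> a \<in> S' \<and> b \<in> S')\<^sup>*\<^sup>* i j" by simp
          qed
          ultimately show "S' \<noteq> {} \<and> S' \<subseteq> I - {l} \<and> conn {e \<in> F. l \<notin> e} S'" by blast
        qed
        show "\<forall>S\<in>\<SS>'. \<forall>S''\<in>\<SS>'. S \<inter> S'' \<noteq> {}"
        proof (intro ballI)
          fix A B assume "A \<in> \<SS>'" "B \<in> \<SS>'"
          then obtain SA SB where S: "SA \<in> \<SS>" "A = SA - {l}" "SB \<in> \<SS>" "B = SB - {l}"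
            unfolding \<SS>'_def by blast
          obtain z where z: "z \<in> SA" "z \<in> SB" using less.prems(4) S by blast
          show "A \<inter> B \<noteq> {}"
          proof (cases "z = l")
            case False then show ?thesis using z S by blast
          next
            case True
            have pin: "p \<in> X" if "X \<in> \<SS>" "l \<in> X" for X
            proof -
              have "X \<noteq> {}" "X \<noteq> {l}" "conn F X" using less.prems(3) that False by auto
              then obtain y where "y \<in> X" "y \<noteq> l" by blast
              then show ?thesis using conn_leaf_nb[OF \<open>conn F X\<close> that(2) _ _ uq] by blast
            qed
            have "p \<in> SA" "p \<in> SB" using pin S z True by auto
            then show ?thesis using S lp(3) by blast
          qed
        qed
      qed
      then obtain t where "t \<in> I - {l}" "\<forall>S\<in>\<SS>'. t \<in> S" by blast
      then show ?thesis unfolding \<SS>'_def by blast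
    qed
  qed
qed

lemma mod_neighbors:
  fixes a L :: nat
  assumes "a < L" "3 \<le> L"
  shows "(a + 1) mod L \<noteq> (a + L - 1) mod L"
proof (cases "a + 1 < L")
  case True
  then have l: "(a + 1) mod L = a + 1" by (rule mod_less)
  show ?thesis
  proof (cases "a = 0")
    case True
    then have e: "a + L - 1 = L - 1" by arith
    have "(L - 1) mod L = L - 1" by (rule mod_less) (use assms in arith)
    then have "(a + L - 1) mod L = L - 1" using e by metis
    moreover have "L - 1 \<noteq> a + 1" using True assms by arith
    ultimately show ?thesis using l by metis
  next
    case False
    then have e: "a + L - 1 = (a - 1) + L" by arith
    have "((a - 1) + L) mod L = (a - 1) mod L" by (rule mod_add_self2)
    also have "\<dots> = a - 1" by (rule mod_less) (use assms in arith)
    finally have "(a + L - 1) mod L = a - 1" using e by metis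
    moreover have "a - 1 \<noteq> a + 1" by arith
    ultimately show ?thesis using l by metis
  qed
next
  case False
  then have "a + 1 = L" using assms by arith
  then have l: "(a + 1) mod L = 0" by (metis mod_self)
  have e: "a + L - 1 = (L - 2) + L" using \<open>a + 1 = L\<close> assms by arith
  have "((L - 2) + L) mod L = (L - 2) mod L" by (rule mod_add_self2)
  also have "\<dots> = L - 2" by (rule mod_less) (use assms in arith)
  finally have "(a + L - 1) mod L = L - 2" using e by metis
  moreover have "L - 2 \<noteq> 0" using assms by arith
  ultimately show ?thesis using l by metis
qed

lemma mod_pred_succ:
  fixes a L :: nat
  assumes "a < L"
  shows "((a + L - 1) mod L + 1) mod L = a"
proof -
  have "((a + L - 1) mod L + 1) mod L = (a + L - 1 + 1) mod L" by (rule mod_add_left_eq)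
  also have "a + L - 1 + 1 = a + L" using assms by arith
  also have "(a + L) mod L = a mod L" by (rule mod_add_self2)
  also have "a mod L = a" by (rule mod_less) (rule assms)
  finally show ?thesis .
qed

lemma add_leaf_tree:
  assumes T: "is_tree I F" and j: "j \<notin> I" and i: "i \<in> I"
  shows "is_tree (insert j I) (insert {j, i} F)"
  unfolding is_tree_def
proof (intro conjI ballI)
  show "finite (insert j I)" using tree_fin[OF T] by simp
  show "insert j I \<noteq> {}" by simp
  show "insert {j, i} F \<subseteq> {{a, b} |a b. a \<in> insert j I \<and> b \<in> insert j I \<and> a \<noteq> b}"
    using tree_sub[OF T] i j by blast
  let ?R = "\<lambda>a b. {a, b} \<in> insert {j, i} F"
  have mono: "?R\<^sup>*\<^sup>* a b" if "(\<lambda>a b. {a, b} \<in> F)\<^sup>*\<^sup>* a b" for a b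
    using that by (rule rtranclp_mono[THEN predicate2D, rotated]) blast
  have ji: "?R j i" and ij: "?R i j" by (auto simp: insert_commute)
  fix x y assume x: "x \<in> insert j I" and y: "y \<in> insert j I"
  show "?R\<^sup>*\<^sup>* x y"
  proof (cases "x = j")
    case True
    show ?thesis
    proof (cases "y = j")
      case True then show ?thesis using \<open>x = j\<close> by simp
    next
      case False
      then have "?R\<^sup>*\<^sup>* i y" using mono tree_conn[OF T i] y by blast
      then show ?thesis using \<open>x = j\<close> converse_rtranclp_into_rtranclp[of ?R j i y, OF ji] by blast
    qed
  next
    case False
    then have xI: "x \<in> I" using x by simp
    show ?thesis
    proof (cases "y = j")
      case True
      have "?R\<^sup>*\<^sup>* x i" using mono tree_conn[OF T xI i] by blast
      then show ?thesis using True rtranclp.rtrancl_into_rtrancl[of ?R x i j, OF _ ij] by blast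
    next
      case False
      then show ?thesis using mono tree_conn[OF T xI] y by blast
    qed
  qed
next
  show "\<not> has_cycle (insert {j, i} F)"
  proof
    assume "has_cycle (insert {j, i} F)"
    then obtain cs where cs: "length cs \<ge> 3" "distinct cs"
      "\<And>a. a < length cs \<Longrightarrow> {cs ! a, cs ! ((a + 1) mod length cs)} \<in> insert {j, i} F"
      unfolding has_cycle_def by blast
    have notF: "{j, y} \<notin> F" for y using tree_edge[OF T, of j y] j by blast
    show False
    proof (cases "j \<in> set cs")
      case False
      have "has_cycle F" unfolding has_cycle_def
      proof (rule exI[of _ cs], intro conjI allI impI)
        show "3 \<le> length cs" using cs(1) .
        show "distinct cs" using cs(2) .
        fix a assume a: "a < length cs"
        have am: "(a + 1) mod length cs < length cs" by (rule mod_less_divisor) (use a in \<open>cases cs; simp\<close>)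
        have "cs ! a \<noteq> j" using False nth_mem[OF a] by auto
        moreover have "cs ! ((a + 1) mod length cs) \<noteq> j" using False nth_mem[OF am] by auto
        moreover have "{cs ! a, cs ! ((a + 1) mod length cs)} \<in> insert {j, i} F" using cs(3) a .
        ultimately show "{cs ! a, cs ! ((a + 1) mod length cs)} \<in> F" by (auto simp: doubleton_eq_iff)
      qed
      then show False using tree_nocyc[OF T] by blast
    next
      case True
      then obtain a where a: "a < length cs" "cs ! a = j" by (auto simp: in_set_conv_nth)
      define L where "L = length cs"
      define b where "b = (a + L - 1) mod L"
      have L3: "3 \<le> L" using cs(1) unfolding L_def .
      have b1: "b < L" unfolding b_def by (rule mod_less_divisor) (use L3 in simp)
      have b: "b < L" "(b + 1) mod L = a" using b1 mod_pred_succ[of a L] a(1) unfolding b_def L_def by auto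
      have e1: "{j, cs ! ((a + 1) mod L)} \<in> insert {j, i} F" using cs(3)[OF a(1)] a(2) unfolding L_def by simp
      have e2: "{cs ! b, j} \<in> insert {j, i} F" using cs(3)[of b] b a(2) unfolding L_def by simp
      have n1: "cs ! ((a + 1) mod L) = i" using e1 notF by (auto simp: doubleton_eq_iff)
      have n2: "cs ! b = i" using e2 notF by (auto simp: doubleton_eq_iff insert_commute)
      have a1: "(a + 1) mod L < L" by (rule mod_less_divisor) (use L3 in simp)
      have ix: "(a + 1) mod L < length cs" "b < length cs" using a1 b1 unfolding L_def by simp_all
      have "cs ! ((a + 1) mod L) = cs ! b" using n1 n2 by simp
      then have eq: "(a + 1) mod L = b"
        using nth_eq_iff_index_eq[OF cs(2) ix] by simp
      have aL: "a < L" using a(1) unfolding L_def .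
      have "(a + 1) mod L \<noteq> b" unfolding b_def by (rule mod_neighbors[OF aL L3])
      then show False using eq by simp
    qed
  qed
qed

lemma td_parts:
  assumes "tree_decomposition V E I F B"
  shows "is_tree I F" "\<And>i. i \<in> I \<Longrightarrow> B i \<subseteq> V" "\<And>v. v \<in> V \<Longrightarrow> \<exists>i\<in>I. v \<in> B i"
    "\<And>e. e \<in> E \<Longrightarrow> \<exists>i\<in>I. e \<subseteq> B i"
    "\<And>v i j. v \<in> V \<Longrightarrow> i \<in> I \<Longrightarrow> j \<in> I \<Longrightarrow> v \<in> B i \<Longrightarrow> v \<in> B j \<Longrightarrow>
        (\<lambda>a b. {a, b} \<in> F \<and> v \<in> B a \<and> v \<in> B b)\<^sup>*\<^sup>* i j"
  using assms unfolding tree_decomposition_def by blast+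

lemma td_edges:
  assumes "tree_decomposition V E I F B" "\<forall>e\<in>E'. \<exists>i\<in>I. e \<subseteq> B i"
  shows "tree_decomposition V E' I F B"
  using assms unfolding tree_decomposition_def by blast

lemma add_leaf_decomp:
  assumes D: "tree_decomposition V E I F B" and j: "j \<notin> I" and i: "i \<in> I"
    and C: "C \<inter> V \<subseteq> B i" and En: "\<forall>e\<in>En. e \<subseteq> C"
  shows "tree_decomposition (V \<union> C) (E \<union> En) (insert j I) (insert {j, i} F) (B(j := C))"
proof -
  note P = td_parts[OF D]
  let ?B = "B(j := C)"
  let ?F = "insert {j, i} F"
  have BI: "?B a = B a" if "a \<in> I" for a using that j by auto
  show ?thesis unfolding tree_decomposition_def
  proof (intro conjI ballI impI)
    show "is_tree (insert j I) ?F" using add_leaf_tree[OF P(1) j i] .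
    fix a assume "a \<in> insert j I"
    then show "?B a \<subseteq> V \<union> C" using P(2) BI by auto
  next
    fix v assume "v \<in> V \<union> C"
    then show "\<exists>a\<in>insert j I. v \<in> ?B a" using P(3) BI by fastforce
  next
    fix e assume "e \<in> E \<union> En"
    then show "\<exists>a\<in>insert j I. e \<subseteq> ?B a" using P(4) BI En by fastforce
  next
    fix v x y assume v: "v \<in> V \<union> C" and x: "x \<in> insert j I" and y: "y \<in> insert j I"
      and vxy: "v \<in> ?B x \<and> v \<in> ?B y"
    let ?R = "\<lambda>a b. {a, b} \<in> ?F \<and> v \<in> ?B a \<and> v \<in> ?B b"
    have mono: "?R\<^sup>*\<^sup>* a b" if "(\<lambda>a b. {a, b} \<in> F \<and> v \<in> B a \<and> v \<in> B b)\<^sup>*\<^sup>* a b" for a b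
      using that
    proof (rule rtranclp_mono[THEN predicate2D, rotated])
      show "(\<lambda>a b. {a, b} \<in> F \<and> v \<in> B a \<and> v \<in> B b) \<le> ?R"
      proof (intro predicate2I)
        fix c d assume cd: "{c, d} \<in> F \<and> v \<in> B c \<and> v \<in> B d"
        then have "c \<in> I" "d \<in> I" using tree_edge[OF P(1)] by blast+
        then show "?R c d" using cd BI by auto
      qed
    qed
    have old: "?R\<^sup>*\<^sup>* a b" if "a \<in> I" "b \<in> I" "v \<in> B a" "v \<in> B b" for a b
    proof -
      have "v \<in> V" using P(2) that by blast
      then show ?thesis using mono P(5) that by blast
    qed
    have viB: "v \<in> B i" if "v \<in> C" "v \<in> B y'" "y' \<in> I" for y'
    proof -
      have "v \<in> V" using P(2) that by blast
      then show "v \<in> B i" using C that by blast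
    qed
    have jlink: "?R j i" "?R i j" if "v \<in> C" "v \<in> B y'" "y' \<in> I" for y'
      using viB[OF that] that j i BI[OF i] by (auto simp: insert_commute)
    show "?R\<^sup>*\<^sup>* x y"
    proof (cases "x = j")
      case True
      show ?thesis
      proof (cases "y = j")
        case True then show ?thesis using \<open>x = j\<close> by simp
      next
        case False
        then have yI: "y \<in> I" and vy: "v \<in> B y" using y vxy BI by auto
        have vC: "v \<in> C" using vxy True by simp
        have "v \<in> B i" using viB[OF vC vy yI] .
        then have "?R\<^sup>*\<^sup>* i y" using old[OF i yI _ vy] by blast
        then show ?thesis using True converse_rtranclp_into_rtranclp[of ?R j i y, OF jlink(1)[OF vC vy yI]] by blast
      qed
    next
      case False
      then have xI: "x \<in> I" and vx: "v \<in> B x" using x vxy BI by auto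
      show ?thesis
      proof (cases "y = j")
        case True
        have vC: "v \<in> C" using vxy True by simp
        have "v \<in> B i" using viB[OF vC vx xI] .
        then have "?R\<^sup>*\<^sup>* x i" using old[OF xI i vx] by blast
        then show ?thesis using True rtranclp.rtrancl_into_rtrancl[of ?R x i j, OF _ jlink(2)[OF vC vx xI]] by blast
      next
        case False
        then have "y \<in> I" "v \<in> B y" using y vxy BI by auto
        then show ?thesis using old[OF xI _ vx] by blast
      qed
    qed
  qed
qed

lemma path_edges_cons2: "path_edges (a # b # xs) = insert {a, b} (path_edges (b # xs))"
proof (rule set_eqI, rule iffI)
  fix e assume "e \<in> path_edges (a # b # xs)"
  then obtain i where i: "e = {(a # b # xs) ! i, (a # b # xs) ! Suc i}" "Suc i < length (a # b # xs)"
    unfolding path_edges_def by blast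
  show "e \<in> insert {a, b} (path_edges (b # xs))"
  proof (cases i)
    case 0 then show ?thesis using i by simp
  next
    case (Suc k)
    then have "e = {(b # xs) ! k, (b # xs) ! Suc k}" "Suc k < length (b # xs)" using i by auto
    then show ?thesis unfolding path_edges_def by blast
  qed
next
  fix e assume "e \<in> insert {a, b} (path_edges (b # xs))"
  then show "e \<in> path_edges (a # b # xs)"
  proof
    assume "e = {a, b}"
    then have "e = {(a # b # xs) ! 0, (a # b # xs) ! Suc 0}" by simp
    then show ?thesis unfolding path_edges_def by fastforce
  next
    assume "e \<in> path_edges (b # xs)"
    then obtain k where k: "e = {(b # xs) ! k, (b # xs) ! Suc k}" "Suc k < length (b # xs)"
      unfolding path_edges_def by blast
    then have "e = {(a # b # xs) ! Suc k, (a # b # xs) ! Suc (Suc k)}" "Suc (Suc k) < length (a # b # xs)" by auto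
    then show ?thesis unfolding path_edges_def by blast
  qed
qed

lemma path_edges_two: "path_edges [u, v] = {{u, v}}"
  unfolding path_edges_def by auto

lemma path_edges_rev_sub: "path_edges (rev xs) \<subseteq> path_edges xs"
proof
  fix e assume "e \<in> path_edges (rev xs)"
  then obtain i where i: "e = {rev xs ! i, rev xs ! Suc i}" "Suc i < length xs"
    unfolding path_edges_def by auto
  define k where "k = length xs - Suc (Suc i)"
  have k: "Suc k < length xs" "rev xs ! i = xs ! Suc k" "rev xs ! Suc i = xs ! k"
    using i(2) unfolding k_def by (auto simp: rev_nth Suc_diff_Suc)
  then have "e = {xs ! k, xs ! Suc k}" using i(1) by (simp add: insert_commute)
  then show "e \<in> path_edges xs" using k(1) unfolding path_edges_def by blast
qed

lemma path_edges_rev: "path_edges (rev xs) = path_edges xs"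
  using path_edges_rev_sub[of xs] path_edges_rev_sub[of "rev xs"] by simp

lemma card3: "card {u, v, w} \<le> 3"
  by (simp add: card_insert_if)

lemma path_decomp:
  fixes I :: "nat set" and B :: "nat \<Rightarrow> 'a set"
  assumes "tree_decomposition V E I F B" "\<forall>i\<in>I. card (B i) \<le> n" "3 \<le> n" "i0 \<in> I"
    "u \<in> B i0" "v \<in> B i0" "distinct P" "set P \<inter> V = {}"
  shows "\<exists>I' F' (B' :: nat \<Rightarrow> 'a set). tree_decomposition (V \<union> set P) (E \<union> path_edges (u # P @ [v])) I' F' B'
           \<and> (\<forall>i\<in>I'. card (B' i) \<le> n) \<and> I \<subseteq> I' \<and> (\<forall>i\<in>I. B' i = B i)"
  using assms
proof (induction P arbitrary: u V E I F B i0)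
  case Nil
  have "\<forall>e\<in>E \<union> path_edges (u # [] @ [v]). \<exists>i\<in>I. e \<subseteq> B i"
    using td_parts(4)[OF Nil.prems(1)] Nil.prems(4-6) by (auto simp: path_edges_two)
  then have "tree_decomposition V (E \<union> path_edges (u # [] @ [v])) I F B"
    using td_edges[OF Nil.prems(1)] by blast
  then show ?case using Nil.prems(2) by auto
next
  case (Cons w P)
  note D = Cons.prems(1)
  have finI: "finite I" using tree_fin[OF td_parts(1)[OF D]] .
  obtain j :: nat where j: "j \<notin> I" using ex_new_if_finite[OF infinite_UNIV_nat finI] by blast
  have uvV: "u \<in> V" "v \<in> V" using td_parts(2)[OF D Cons.prems(4)] Cons.prems(5,6) by auto
  have wV: "w \<notin> V" using Cons.prems(8) by auto
  define C where "C = {u, v, w}"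
  have CV: "C \<inter> V \<subseteq> B i0" using wV Cons.prems(5,6) unfolding C_def by auto
  have D1: "tree_decomposition (V \<union> C) (E \<union> {{u, w}}) (insert j I) (insert {j, i0} F) (B(j := C))"
    by (rule add_leaf_decomp[OF D j Cons.prems(4) CV]) (auto simp: C_def)
  have c1: "\<forall>i\<in>insert j I. card ((B(j := C)) i) \<le> n"
    using Cons.prems(2,3) card3[of u v w] unfolding C_def by auto
  have "set P \<inter> (V \<union> C) = {}" using Cons.prems(7,8) uvV unfolding C_def by auto
  have w1: "w \<in> (B(j := C)) j" "v \<in> (B(j := C)) j" by (simp_all add: C_def)
  have dP: "distinct P" using Cons.prems(7) by simp
  note IH = Cons.IH[OF D1 c1 Cons.prems(3) insertI1 w1 dP \<open>set P \<inter> (V \<union> C) = {}\<close>]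
  from IH obtain I' F' B' where R: "tree_decomposition (V \<union> C \<union> set P) (E \<union> {{u, w}} \<union> path_edges (w # P @ [v])) I' F' B'"
    "\<forall>i\<in>I'. card (B' i) \<le> n" "insert j I \<subseteq> I'" "\<forall>i\<in>insert j I. B' i = (B(j := C)) i"
    by (elim exE conjE)
  have "V \<union> C \<union> set P = V \<union> set (w # P)" using uvV unfolding C_def by auto
  moreover have "E \<union> {{u, w}} \<union> path_edges (w # P @ [v]) = E \<union> path_edges (u # (w # P) @ [v])"
    using path_edges_cons2[of u w "P @ [v]"] by auto
  moreover have "\<forall>i\<in>I. B' i = B i" using R(4) j by auto
  ultimately show ?case using R by auto
qed

locale pc =
  fixes M :: "'a set" and P :: "'a \<Rightarrow> 'a \<Rightarrow> 'a list" and V :: "'a set" and E :: "'a set set"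
    and n :: nat and f :: "'a \<Rightarrow> nat"
  assumes finM: "finite M" and cardM: "card M = n"
    and Pp: "\<And>u v. u \<in> M \<Longrightarrow> v \<in> M \<Longrightarrow> u \<noteq> v \<Longrightarrow>
               P v u = rev (P u v) \<and> distinct (P u v) \<and> set (P u v) \<inter> M = {}"
    and Pd: "\<And>u v u' v'. u \<in> M \<Longrightarrow> v \<in> M \<Longrightarrow> u' \<in> M \<Longrightarrow> v' \<in> M \<Longrightarrow> u \<noteq> v \<Longrightarrow> u' \<noteq> v' \<Longrightarrow>
               {u, v} \<noteq> {u', v'} \<Longrightarrow> set (P u v) \<inter> set (P u' v') = {}"
    and Vd: "V = M \<union> \<Union>{set (P u v) | u v. u \<in> M \<and> v \<in> M \<and> u \<noteq> v}"
    and Ed: "E = \<Union>{path_edges (u # P u v @ [v]) | u v. u \<in> M \<and> v \<in> M \<and> u \<noteq> v}"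
    and injf: "inj_on f M"
    and n3: "3 \<le> n"
begin

definition D where "D = {(u, v). u \<in> M \<and> v \<in> M \<and> f u < f v}"
definition VQ where "VQ Q = M \<union> \<Union>{set (P u v) | u v. (u, v) \<in> Q}"
definition EQ where "EQ Q = \<Union>{path_edges (u # P u v @ [v]) | u v. (u, v) \<in> Q}"

lemma D_ne: "(u, v) \<in> D \<Longrightarrow> u \<in> M \<and> v \<in> M \<and> u \<noteq> v \<and> f u < f v"
  unfolding D_def by auto

lemma VQ_empty: "VQ {} = M" unfolding VQ_def by auto
lemma EQ_empty: "EQ {} = {}" unfolding EQ_def by auto
lemma VQ_insert: "VQ (insert (u, v) Q) = VQ Q \<union> set (P u v)" unfolding VQ_def by blast
lemma EQ_insert: "EQ (insert (u, v) Q) = EQ Q \<union> path_edges (u # P u v @ [v])" unfolding EQ_def by blast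

lemma base_decomp:
  "tree_decomposition M {} {0::nat} {} (\<lambda>_. M)"
proof -
  have "\<not> has_cycle ({} :: nat set set)"
  proof
    assume "has_cycle ({} :: nat set set)"
    then obtain cs :: "nat list" where c: "3 \<le> length cs" "\<forall>i < length cs. {cs ! i, cs ! ((i + 1) mod length cs)} \<in> ({} :: nat set set)"
      unfolding has_cycle_def by blast
    have "0 < length cs" using c(1) by linarith
    then show False using c(2) by blast
  qed
  then have "is_tree {0::nat} {}" unfolding is_tree_def by auto
  then show ?thesis unfolding tree_decomposition_def by auto
qed

lemma Q_decomp:
  assumes "finite Q" "Q \<subseteq> D"
  shows "\<exists>(I :: nat set) F B. tree_decomposition (VQ Q) (EQ Q) I F B \<and> (\<forall>i\<in>I. card (B i) \<le> n) \<and> 0 \<in> I \<and> B 0 = M"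
  using assms
proof (induction Q rule: finite_induct)
  case empty
  show ?case using base_decomp cardM by (auto simp: VQ_empty EQ_empty)
next
  case (insert x Q)
  obtain u v where x: "x = (u, v)" by (cases x)
  have uv: "u \<in> M" "v \<in> M" "u \<noteq> v" "f u < f v" using D_ne insert.prems x by auto
  obtain I F B where IH: "tree_decomposition (VQ Q) (EQ Q) (I :: nat set) F B" "\<forall>i\<in>I. card (B i) \<le> n" "0 \<in> I" "B 0 = M"
    using insert.IH insert.prems by auto
  have dist: "distinct (P u v)" using Pp[OF uv(1-3)] by blast
  have disj: "set (P u v) \<inter> VQ Q = {}"
  proof -
    have "set (P u v) \<inter> M = {}" using Pp[OF uv(1-3)] by blast
    moreover have "set (P u v) \<inter> set (P u' v') = {}" if "(u', v') \<in> Q" for u' v'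
    proof -
      have q: "(u', v') \<in> D" "(u', v') \<noteq> (u, v)" using that insert.prems insert.hyps(2) x by auto
      then have uv': "u' \<in> M" "v' \<in> M" "u' \<noteq> v'" "f u' < f v'" using D_ne by auto
      have "{u, v} \<noteq> {u', v'}"
      proof
        assume "{u, v} = {u', v'}"
        then have "(u = u' \<and> v = v') \<or> (u = v' \<and> v = u')" by (auto simp: doubleton_eq_iff)
        then show False using q(2) uv(4) uv'(4) by auto
      qed
      then show ?thesis using Pd[OF uv(1,2) uv'(1,2) uv(3) uv'(3)] by blast
    qed
    ultimately show ?thesis unfolding VQ_def by blast
  qed
  from path_decomp[OF IH(1,2) n3 IH(3) _ _ dist disj, of u v] IH(4) uv(1,2)
  obtain I' F' B' where R: "tree_decomposition (VQ Q \<union> set (P u v)) (EQ Q \<union> path_edges (u # P u v @ [v])) I' F' B'"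
    "\<forall>i\<in>I'. card (B' i) \<le> n" "I \<subseteq> I'" "\<forall>i\<in>I. B' i = B i"
    by blast
  show ?case using R IH(3,4) unfolding x VQ_insert EQ_insert by blast
qed

lemma finD: "finite D"
proof -
  have "D \<subseteq> M \<times> M" unfolding D_def by auto
  then show ?thesis using finM finite_subset by blast
qed

lemma VQ_D: "VQ D = V"
proof
  show "VQ D \<subseteq> V" unfolding VQ_def Vd D_def by blast
next
  show "V \<subseteq> VQ D"
  proof
    fix x assume "x \<in> V"
    then consider "x \<in> M" | u v where "u \<in> M" "v \<in> M" "u \<noteq> v" "x \<in> set (P u v)"
      unfolding Vd by blast
    then show "x \<in> VQ D"
    proof cases
      case 1 then show ?thesis unfolding VQ_def by blast
    next
      case (2 u v)
      have "f u \<noteq> f v" using injf 2 by (meson inj_on_eq_iff)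
      then consider "f u < f v" | "f v < f u" by linarith
      then show ?thesis
      proof cases
        case 1 then show ?thesis using 2 unfolding VQ_def D_def by blast
      next
        case b: 2
        have "P u v = rev (P v u)" using Pp[of v u] 2 by auto
        then have "x \<in> set (P v u)" using 2 by simp
        then show ?thesis using 2 b unfolding VQ_def D_def by blast
      qed
    qed
  qed
qed

lemma E_EQ: "E \<subseteq> EQ D"
proof
  fix e assume "e \<in> E"
  then obtain u v where uv: "u \<in> M" "v \<in> M" "u \<noteq> v" "e \<in> path_edges (u # P u v @ [v])"
    unfolding Ed by blast
  have "f u \<noteq> f v" using injf uv by (meson inj_on_eq_iff)
  then consider "f u < f v" | "f v < f u" by linarith
  then show "e \<in> EQ D"
  proof cases
    case 1 then show ?thesis using uv unfolding EQ_def D_def by blast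
  next
    case 2
    have "P u v = rev (P v u)" using Pp[of v u] uv by auto
    then have "u # P u v @ [v] = rev (v # P v u @ [u])" by simp
    then have "e \<in> path_edges (v # P v u @ [u])" using uv(4) path_edges_rev by metis
    then show ?thesis using uv 2 unfolding EQ_def D_def by blast
  qed
qed

lemma upper: "\<exists>(I :: nat set) F B. tree_decomposition V E I F B \<and> (\<forall>i\<in>I. card (B i) \<le> n)"
proof -
  obtain I F B where R: "tree_decomposition (VQ D) (EQ D) (I :: nat set) F B" "\<forall>i\<in>I. card (B i) \<le> n"
    using Q_decomp[OF finD] by blast
  have "tree_decomposition V E I F B"
    using td_edges[OF R(1)] td_parts(4)[OF R(1)] E_EQ unfolding VQ_D by blast
  then show ?thesis using R(2) by blast
qed

lemma finV: "finite V"
proof -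
  have "{set (P u v) | u v. u \<in> M \<and> v \<in> M \<and> u \<noteq> v} \<subseteq> (\<lambda>(u, v). set (P u v)) ` (M \<times> M)" by auto
  then have "finite {set (P u v) | u v. u \<in> M \<and> v \<in> M \<and> u \<noteq> v}"
    using finM finite_subset by blast
  then show ?thesis unfolding Vd using finM by auto
qed

lemma edge_in_E:
  assumes "u \<in> M" "v \<in> M" "u \<noteq> v" "k < Suc (length (P u v))"
  shows "{(u # P u v @ [v]) ! k, (u # P u v @ [v]) ! Suc k} \<in> E"
proof -
  have "{(u # P u v @ [v]) ! k, (u # P u v @ [v]) ! Suc k} \<in> path_edges (u # P u v @ [v])"
    unfolding path_edges_def using assms(4) by auto
  then show ?thesis unfolding Ed using assms(1-3) by blast
qed

end

context pc begin

lemma MV: "M \<subseteq> V" unfolding Vd by blast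

lemma PV: "u \<in> M \<Longrightarrow> v \<in> M \<Longrightarrow> u \<noteq> v \<Longrightarrow> set (P u v) \<subseteq> V"
proof -
  assume a: "u \<in> M" "v \<in> M" "u \<noteq> v"
  then have "set (P u v) \<in> {set (P u v) | u v. u \<in> M \<and> v \<in> M \<and> u \<noteq> v}" by blast
  then show ?thesis unfolding Vd by blast
qed

lemma lower:
  assumes td: "tree_decomposition V E I F B"
  shows "\<exists>t\<in>I. n \<le> card (B t)"
proof -
  note TD = td_parts[OF td]
  define X where "X u = insert u (\<Union>{set (P u v) | v. v \<in> M \<and> f u < f v})" for u
  define T where "T u = {i \<in> I. B i \<inter> X u \<noteq> {}}" for u
  have XV: "X u \<subseteq> V" if "u \<in> M" for u
  proof -
    have "S \<subseteq> V" if S: "S \<in> {set (P u v) | v. v \<in> M \<and> f u < f v}" for S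
    proof -
      obtain v where v: "v \<in> M" "f u < f v" "S = set (P u v)" using S by blast
      have "u \<noteq> v" using v(2) by auto
      then show ?thesis using PV[OF \<open>u \<in> M\<close> v(1)] v(3) by blast
    qed
    then have "\<Union>{set (P u v) | v. v \<in> M \<and> f u < f v} \<subseteq> V" by (rule Union_least)
    then show ?thesis unfolding X_def using MV that by blast
  qed
  have notX: "u \<notin> X w" if uw: "u \<in> M" "w \<in> M" "u \<noteq> w" for u w
  proof
    assume "u \<in> X w"
    then obtain v where v: "v \<in> M" "f w < f v" "u \<in> set (P w v)" unfolding X_def using uw(3) by blast
    have "w \<noteq> v" using v(2) by auto
    then show False using Pp[OF uw(2) v(1)] v(3) uw(1) by blast
  qed
  have Xdisj: "X u \<inter> X w = {}" if uw: "u \<in> M" "w \<in> M" "u \<noteq> w" for u w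
  proof (rule ccontr)
    assume "X u \<inter> X w \<noteq> {}"
    then obtain x where x: "x \<in> X u" "x \<in> X w" by blast
    have "x \<noteq> u" using notX[OF uw(1,2,3)] x(2) by blast
    moreover have "x \<noteq> w" using notX[OF uw(2,1)] uw(3) x(1) by blast
    have xu: "x \<in> \<Union>{set (P u v) | v. v \<in> M \<and> f u < f v}" using x(1) \<open>x \<noteq> u\<close> unfolding X_def by simp
    have xw: "x \<in> \<Union>{set (P w v) | v. v \<in> M \<and> f w < f v}" using x(2) \<open>x \<noteq> w\<close> unfolding X_def by simp
    obtain v where v: "v \<in> M" "f u < f v" "x \<in> set (P u v)" using xu by blast
    obtain v' where v': "v' \<in> M" "f w < f v'" "x \<in> set (P w v')" using xw by blast
    note vv = v v'
    have "u \<noteq> v" "w \<noteq> v'" using vv by auto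
    have "{u, v} \<noteq> {w, v'}"
    proof
      assume "{u, v} = {w, v'}"
      then have "u = v'" "v = w" using uw(3) by (auto simp: doubleton_eq_iff)
      then show False using vv(2,5) by simp
    qed
    then show False using Pd[OF uw(1) vv(1) uw(2) vv(4) \<open>u \<noteq> v\<close> \<open>w \<noteq> v'\<close>] vv(3,6) by blast
  qed
  have Lmem: "(u # P u v @ [v]) ! k \<in> X u" if "u \<in> M" "v \<in> M" "f u < f v" "k \<le> length (P u v)" for u v k
  proof (cases k)
    case 0 then show ?thesis unfolding X_def by simp
  next
    case (Suc k')
    then have "k' < length (P u v)" using that(4) by simp
    then have "(u # P u v @ [v]) ! k = P u v ! k'" using Suc by (simp add: nth_append)
    moreover have "P u v ! k' \<in> set (P u v)" using \<open>k' < length (P u v)\<close> by simp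
    then have "P u v ! k' \<in> \<Union>{set (P u v') | v'. v' \<in> M \<and> f u < f v'}" using that(2,3) by blast
    ultimately show ?thesis unfolding X_def by simp
  qed
  have lift: "(\<lambda>a b. {a, b} \<in> F \<and> a \<in> T u \<and> b \<in> T u)\<^sup>*\<^sup>* a b"
    if "u \<in> M" "x \<in> X u" "a \<in> I" "b \<in> I" "x \<in> B a" "x \<in> B b" for u x a b
  proof -
    have "x \<in> V" using XV[OF that(1)] that(2) by blast
    from TD(5)[OF this that(3-6)]
    show ?thesis
    proof (rule rtranclp_mono[THEN predicate2D, rotated])
      show "(\<lambda>a b. {a, b} \<in> F \<and> x \<in> B a \<and> x \<in> B b) \<le> (\<lambda>a b. {a, b} \<in> F \<and> a \<in> T u \<and> b \<in> T u)"
      proof (intro predicate2I)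
        fix c d assume cd: "{c, d} \<in> F \<and> x \<in> B c \<and> x \<in> B d"
        then have "c \<in> I" "d \<in> I" using tree_edge[OF TD(1)] by blast+
        then show "{c, d} \<in> F \<and> c \<in> T u \<and> d \<in> T u" using cd that(2) unfolding T_def by blast
      qed
    qed
  qed
  have connT: "conn F (T u)" if uM: "u \<in> M" for u
  proof -
    let ?R = "\<lambda>a b. {a, b} \<in> F \<and> a \<in> T u \<and> b \<in> T u"
    have "u \<in> V" using XV[OF uM] unfolding X_def by blast
    then obtain i0 where i0: "i0 \<in> I" "u \<in> B i0" using TD(3) by blast
    have uX: "u \<in> X u" unfolding X_def by blast
    have claim1: "\<forall>i\<in>I. (u # P u v @ [v]) ! k \<in> B i \<longrightarrow> ?R\<^sup>*\<^sup>* i0 i"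
      if v: "v \<in> M" "f u < f v" and k: "k \<le> length (P u v)" for v k
      using k
    proof (induction k)
      case 0
      show ?case using lift[OF uM uX i0(1) _ i0(2)] by simp
    next
      case (Suc k)
      have uv: "u \<noteq> v" using v(2) by auto
      have "{(u # P u v @ [v]) ! k, (u # P u v @ [v]) ! Suc k} \<in> E"
        using edge_in_E[OF uM v(1) uv] Suc.prems by simp
      then obtain j where j: "j \<in> I" "(u # P u v @ [v]) ! k \<in> B j" "(u # P u v @ [v]) ! Suc k \<in> B j"
        using TD(4) by blast
      have "?R\<^sup>*\<^sup>* i0 j" using Suc.IH Suc.prems j by simp
      moreover have "(u # P u v @ [v]) ! Suc k \<in> X u" using Lmem[OF uM v Suc.prems] .
      ultimately show ?case using lift[OF uM _ j(1) _ j(3)] by (meson rtranclp_trans)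
    qed
    have claim2: "?R\<^sup>*\<^sup>* i0 i" if iT: "i \<in> T u" for i
    proof -
      obtain x where x: "i \<in> I" "x \<in> B i" "x \<in> X u" using iT unfolding T_def by blast
      show ?thesis
      proof (cases "x = u")
        case True
        then show ?thesis using lift[OF uM uX i0(1) x(1) i0(2)] x(2) by simp
      next
        case False
        then obtain v where v: "v \<in> M" "f u < f v" "x \<in> set (P u v)" using x(3) unfolding X_def by blast
        then obtain k where k: "k < length (P u v)" "P u v ! k = x" by (auto simp: in_set_conv_nth)
        have "(u # P u v @ [v]) ! Suc k = x" using k by (simp add: nth_append)
        then show ?thesis using claim1[OF v(1,2), of "Suc k"] k x(1,2) by simp
      qed
    qed
    have symR: "?R b a" if "?R a b" for a b using that by (auto simp: insert_commute)
    show ?thesis unfolding conn_def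
    proof (intro ballI)
      fix i j assume "i \<in> T u" "j \<in> T u"
      then have "?R\<^sup>*\<^sup>* i i0" "?R\<^sup>*\<^sup>* i0 j" using claim2 sym_rt[of ?R, OF symR] by blast+
      then show "?R\<^sup>*\<^sup>* i j" by (rule rtranclp_trans)
    qed
  qed
  have touch: "T u \<inter> T w \<noteq> {}" if "u \<in> M" "w \<in> M" "f u < f w" for u w
  proof -
    define m where "m = length (P u w)"
    have uw: "u \<noteq> w" using that(3) by auto
    have "{(u # P u w @ [w]) ! m, (u # P u w @ [w]) ! Suc m} \<in> E"
      using edge_in_E[OF that(1,2) uw, of m] unfolding m_def by blast
    then obtain i where i: "i \<in> I" "(u # P u w @ [w]) ! m \<in> B i" "(u # P u w @ [w]) ! Suc m \<in> B i"
      using TD(4) by blast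
    have w1: "(u # P u w @ [w]) ! Suc m = w" unfolding m_def by (simp add: nth_append)
    have x1: "(u # P u w @ [w]) ! m \<in> X u" using Lmem[OF that] unfolding m_def by simp
    have w2: "w \<in> X w" unfolding X_def by simp
    have "B i \<inter> X u \<noteq> {}" using i(2) x1 by blast
    then have iu: "i \<in> T u" unfolding T_def using i(1) by simp
    have "B i \<inter> X w \<noteq> {}" using i(3) w1 w2 by auto
    then have iw: "i \<in> T w" unfolding T_def using i(1) by simp
    show ?thesis using iu iw by blast
  qed
  have TI: "T u \<subseteq> I" for u unfolding T_def by blast
  have Tne: "T u \<noteq> {}" if "u \<in> M" for u
  proof -
    have "u \<in> V" using XV[OF that] unfolding X_def by blast
    then obtain i where "i \<in> I" "u \<in> B i" using TD(3) by blast
    then show ?thesis unfolding T_def X_def by blast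
  qed
  have Mne: "M \<noteq> {}" using cardM n3 by auto
  have "\<exists>t\<in>I. \<forall>S\<in>T ` M. t \<in> S"
  proof (rule helly[OF TD(1)])
    show "T ` M \<noteq> {}" using Mne by blast
    show "\<forall>S\<in>T ` M. S \<noteq> {} \<and> S \<subseteq> I \<and> conn F S" using Tne TI connT by blast
    show "\<forall>S\<in>T ` M. \<forall>S'\<in>T ` M. S \<inter> S' \<noteq> {}"
    proof (intro ballI)
      fix S S' assume "S \<in> T ` M" "S' \<in> T ` M"
      then obtain u w where uw: "u \<in> M" "w \<in> M" "S = T u" "S' = T w" by blast
      show "S \<inter> S' \<noteq> {}"
      proof (cases "u = w")
        case True then show ?thesis using Tne uw by auto
      next
        case False
        then have "f u \<noteq> f w" using injf uw by (meson inj_on_eq_iff)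
        then consider "f u < f w" | "f w < f u" by linarith
        then show ?thesis
        proof cases
          case 1 then show ?thesis using touch[OF uw(1,2)] uw by blast
        next
          case 2 then show ?thesis using touch[OF uw(2,1)] uw by blast
        qed
      qed
    qed
  qed
  then obtain t where t: "t \<in> I" "\<And>u. u \<in> M \<Longrightarrow> t \<in> T u" by blast
  define g where "g u = (SOME x. x \<in> B t \<inter> X u)" for u
  have g: "g u \<in> B t \<inter> X u" if "u \<in> M" for u
  proof -
    have "B t \<inter> X u \<noteq> {}" using t(2)[OF that] unfolding T_def by blast
    then have "\<exists>x. x \<in> B t \<inter> X u" by blast
    then show ?thesis unfolding g_def by (rule someI_ex)
  qed
  have "inj_on g M"
  proof (rule inj_onI)
    fix u w assume uw: "u \<in> M" "w \<in> M" "g u = g w"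
    show "u = w"
    proof (rule ccontr)
      assume "u \<noteq> w"
      have "g u \<in> X u" "g w \<in> X w" using g[OF uw(1)] g[OF uw(2)] by auto
      then show False using Xdisj[OF uw(1,2) \<open>u \<noteq> w\<close>] uw(3) by auto
    qed
  qed
  moreover have "g ` M \<subseteq> B t" using g by auto
  moreover have "finite (B t)" using TD(2)[OF t(1)] finV finite_subset by blast
  ultimately have "card M \<le> card (B t)" by (rule card_inj_on_le)
  then show ?thesis using t(1) cardM by blast
qed

end

theorem theorem8:
  fixes V :: "'a set" and E :: "'a set set" and n k :: nat
  assumes "pseudo_clique V E n k" and "n \<ge> 3"
  shows "treewidth V E = n - 1"
proof -
  from assms(1) obtain M P where h: "finite M" "card M = n"
    "\<forall>u\<in>M. \<forall>v\<in>M. u \<noteq> v \<longrightarrow> P v u = rev (P u v) \<and> distinct (P u v) \<and> set (P u v) \<inter> M = {}"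
    "\<forall>u\<in>M. \<forall>v\<in>M. \<forall>u'\<in>M. \<forall>v'\<in>M. u \<noteq> v \<and> u' \<noteq> v' \<and> {u, v} \<noteq> {u', v'} \<longrightarrow>
            set (P u v) \<inter> set (P u' v') = {}"
    "V = M \<union> \<Union>{set (P u v) | u v. u \<in> M \<and> v \<in> M \<and> u \<noteq> v}"
    "E = \<Union>{path_edges (u # P u v @ [v]) | u v. u \<in> M \<and> v \<in> M \<and> u \<noteq> v}"
    unfolding pseudo_clique_def by blast
  obtain f :: "'a \<Rightarrow> nat" where f: "inj_on f M"
    using finite_imp_inj_to_nat_seg[OF h(1)] by blast
  interpret pc M P V E n f
  proof (unfold_locales)
    show "finite M" "card M = n" "inj_on f M" "3 \<le> n" using h(1,2) f assms(2) by auto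
    show "V = M \<union> \<Union>{set (P u v) | u v. u \<in> M \<and> v \<in> M \<and> u \<noteq> v}" using h(5) .
    show "E = \<Union>{path_edges (u # P u v @ [v]) | u v. u \<in> M \<and> v \<in> M \<and> u \<noteq> v}" using h(6) .
    fix u v assume "u \<in> M" "v \<in> M" "u \<noteq> v"
    then show "P v u = rev (P u v) \<and> distinct (P u v) \<and> set (P u v) \<inter> M = {}" using h(3) by blast
  next
    fix u v u' v' assume "u \<in> M" "v \<in> M" "u' \<in> M" "v' \<in> M" "u \<noteq> v" "u' \<noteq> v'" "{u, v} \<noteq> {u', v'}"
    then show "set (P u v) \<inter> set (P u' v') = {}" using h(4) by blast
  qed
  have lowW: "n - 1 \<le> decomp_width I B" if td: "tree_decomposition V E (I :: nat set) F B" for I F B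
  proof -
    obtain t where t: "t \<in> I" "n \<le> card (B t)" using lower[OF td] by blast
    have "finite I" using tree_fin[OF td_parts(1)[OF td]] .
    then have "card (B t) \<le> Max ((\<lambda>i. card (B i)) ` I)" using t(1) by (simp add: Max_ge)
    then show ?thesis unfolding decomp_width_def using t(2) by linarith
  qed
  obtain I0 F0 B0 where U: "tree_decomposition V E (I0 :: nat set) F0 B0" "\<forall>i\<in>I0. card (B0 i) \<le> n"
    using upper by blast
  have "decomp_width I0 B0 \<le> n - 1"
  proof -
    have "finite I0" "I0 \<noteq> {}" using tree_fin[OF td_parts(1)[OF U(1)]] tree_ne[OF td_parts(1)[OF U(1)]] by auto
    then have "Max ((\<lambda>i. card (B0 i)) ` I0) \<le> n" using U(2) by (simp add: Max_le_iff)
    then show ?thesis unfolding decomp_width_def by linarith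
  qed
  then have W: "decomp_width I0 B0 = n - 1" using lowW[OF U(1)] by linarith
  show ?thesis unfolding treewidth_def
  proof (rule Least_equality)
    show "\<exists>(I :: nat set) F B. tree_decomposition V E I F B \<and> decomp_width I B = n - 1"
      using U(1) W by blast
    fix w assume "\<exists>(I :: nat set) F B. tree_decomposition V E I F B \<and> decomp_width I B = w"
    then show "n - 1 \<le> w" using lowW by blast
  qed
qed

end
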